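(* Let $(\alpha_k)_{k\ge1}$ be a sequence of real numbers with $\alpha_k>0$ for all $k\ge1$ such that $\sum_{k=1}^\infty\frac{\alpha_{k+1}^2}{\alpha_k}$ converges. Then $\sum_{k=1}^\infty\alpha_k$ converges. *)

theory Defs
  imports "HOL-Analysis.Analysis"
begin

end

theory Submission
  imports Defs
begin

theorem lemma6p1:
  fixes \<alpha> :: "nat \<Rightarrow> real"
  assumes pos: "\<And>k. k \<ge> 1 \<Longrightarrow> \<alpha> k > 0"
    and conv: "summable (\<lambda>k. (\<alpha> (Suc (Suc k)))\<^sup>2 / \<alpha> (Suc k))"
  shows "summable (\<lambda>k. \<alpha> (Suc k))"
proof -
  define a where "a = (\<lambda>k. \<alpha> (Suc k))"
  define b where "b = (\<lambda>k. (a (Suc k))\<^sup>2 / a k)"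
  have apos: "a k > 0" for k using pos[of "Suc k"] by (simp add: a_def)
  have bs: "summable b" using conv by (simp add: a_def b_def)
  have bnn: "b k \<ge> 0" for k using apos[of k] by (simp add: b_def)
  define B where "B = suminf b"
  have bB: "sum b {..<n} \<le> B" for n
    unfolding B_def using bs bnn by (intro sum_le_suminf) auto
  have step: "2 * a (Suc k) \<le> b k + a k" for k
  proof -
    have "0 \<le> (a (Suc k) - a k)\<^sup>2" by simp
    hence "2 * a (Suc k) * a k \<le> (a (Suc k))\<^sup>2 + a k * a k"
      by (simp add: power2_eq_square algebra_simps)
    hence "2 * a (Suc k) * a k \<le> (b k + a k) * a k"
      using apos[of k] by (simp add: b_def algebra_simps power2_eq_square)
    thus ?thesis using apos[of k] by simp
  qed
  have bound: "sum a {..<n} \<le> 2 * a 0 + B" for n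
  proof (cases n)
    case 0 thus ?thesis using apos[of 0] bB[of 0] by simp
  next
    case (Suc m)
    have "sum a {..<Suc m} = a 0 + (\<Sum>k<m. a (Suc k))"
      by (rule sum.lessThan_Suc_shift)
    moreover have "2 * (\<Sum>k<m. a (Suc k)) \<le> sum b {..<m} + sum a {..<m}"
      unfolding sum_distrib_left sum.distrib[symmetric] by (rule sum_mono) (rule step)
    moreover have "sum a {..<m} \<le> sum a {..<Suc m}"
      using apos by (simp add: less_imp_le)
    ultimately show ?thesis using bB[of m] unfolding Suc by linarith
  qed
  have "summable a"
    by (rule summableI_nonneg_bounded[where x="2 * a 0 + B"]) (use apos bound in \<open>auto simp: less_imp_le\<close>)
  thus ?thesis by (simp add: a_def)
qed

end
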